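(* Let $N_1,N_2,N_w,N_b,N$ and $T$ be as in the context, and let $\lambda_k=1-\frac{k(N-k+1)}{N_1N_2}$ for $k=0,\dots,N_w$. For each $k$ define $b^k=(b^k_0,\dots,b^k_{N_w})$ by $b^k_i=0$ for $i<k$ and $$b^k_i=(-1)^{i-k}\,\frac{(k-N_1)_{i-k}\,(k-N_w)_{i-k}}{(i-k)!\,(2k-N)_{i-k}},\qquad k\le i\le N_w$$ (all denominators are nonzero). Then $b^k$ satisfies, for all $i=0,\dots,N_w$ (with $b^k_{-1}:=0$), $$N_1N_2(\lambda_k-1)\,b^k_i=(N_1-i+1)(N_w-i+1)\,b^k_{i-1}-i\,(N_w-i+N_b+1)\,b^k_i,$$ and consequently the vector $c$ with $c_i=\sum_{j=i}^{N_w}(-1)^{j-i}\binom{j}{i}b^k_j$ is a nonzero right eigenvector of $T$ with eigenvalue $\lambda_k$. Equivalently, the polynomial $H^{(k)}(u,y,z)=\sum_{i=k}^{N_w}b^k_i\,u^iy^{N_1-i}z^{N_w-i}$ yields, via $G^{(k)}(x,y,z)=H^{(k)}(x-yz,y,z)=\sum_i c_i x^iy^{N_1-i}z^{N_w-i}$, the eigenvector coefficients $c_i$.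
   Context: Integers $N_1,N_2\ge1$, $N_w,N_b\ge0$ with $N_w+N_b=N_1+N_2=:N$, $N_w\le N_1$, $N_w\le N_2$. States $i\in\{0,\dots,N_w\}$. $p_i=\frac{(N_1-i)(N_w-i)}{N_1N_2}$, $q_i=\frac{i(N_b-N_1+i)}{N_1N_2}$, $r_i=1-p_i-q_i$. $T$ is the $(N_w+1)\times(N_w+1)$ matrix with $T_{i+1,i}=p_i$, $T_{i-1,i}=q_i$, $T_{ii}=r_i$, other entries $0$ (columns sum to 1). Right eigenvector: $Tc=\lambda c$. $(a)_n=a(a+1)\cdots(a+n-1)$, $(a)_0=1$. *)

theory Defs
  imports Complex_Main
begin

text \<open>Urn-model transition matrix. States are 0..Nw; the matrix T is represented
  as a function nat => nat => real, with T i j the entry in row i, column j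
  (only indices i, j \<le> Nw are meaningful).\<close>

definition pp :: "nat \<Rightarrow> nat \<Rightarrow> nat \<Rightarrow> nat \<Rightarrow> real" where
  "pp N1 N2 Nw i = (real N1 - real i) * (real Nw - real i) / (real N1 * real N2)"

definition qq :: "nat \<Rightarrow> nat \<Rightarrow> nat \<Rightarrow> nat \<Rightarrow> real" where
  "qq N1 N2 Nb i = real i * (real Nb - real N1 + real i) / (real N1 * real N2)"

definition rr :: "nat \<Rightarrow> nat \<Rightarrow> nat \<Rightarrow> nat \<Rightarrow> nat \<Rightarrow> real" where
  "rr N1 N2 Nw Nb i = 1 - pp N1 N2 Nw i - qq N1 N2 Nb i"

definition Tmat :: "nat \<Rightarrow> nat \<Rightarrow> nat \<Rightarrow> nat \<Rightarrow> nat \<Rightarrow> nat \<Rightarrow> real" where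
  "Tmat N1 N2 Nw Nb i j =
     (if i = j + 1 then pp N1 N2 Nw j
      else if j = i + 1 then qq N1 N2 Nb j
      else if i = j then rr N1 N2 Nw Nb j
      else 0)"

definition lam :: "nat \<Rightarrow> nat \<Rightarrow> nat \<Rightarrow> nat \<Rightarrow> real" where
  "lam N1 N2 N k = 1 - real k * (real N - real k + 1) / (real N1 * real N2)"

definition bvec :: "nat \<Rightarrow> nat \<Rightarrow> nat \<Rightarrow> nat \<Rightarrow> nat \<Rightarrow> real" where
  "bvec N1 Nw N k i =
     (if i < k then 0
      else (-1) ^ (i - k) * pochhammer (real k - real N1) (i - k)
             * pochhammer (real k - real Nw) (i - k)
           / (fact (i - k) * pochhammer (2 * real k - real N) (i - k)))"

definition cvec :: "nat \<Rightarrow> nat \<Rightarrow> nat \<Rightarrow> nat \<Rightarrow> nat \<Rightarrow> real" where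
  "cvec N1 Nw N k i = (\<Sum>j = i..Nw. (-1) ^ (j - i) * real (j choose i) * bvec N1 Nw N k j)"

end

theory Submission
  imports Defs
begin

definition Mm :: "nat \<Rightarrow> nat \<Rightarrow> real" where
  "Mm i j = (if i \<le> j then (-1)^(j-i) * real (j choose i) else 0)"

lemma binrel1: "(d+1) * ((i'+1+d) choose i') = (i'+1) * ((i'+1+d) choose (i'+1))"
  by (metis Suc_times_binomial_add Suc_eq_plus1 add.commute add_Suc_right)
lemma binrel2: "(i+1) * ((i+d) choose (i+1)) = d * ((i+d) choose i)"
  by (metis Suc_eq_plus1 binomial_absorb_comp binomial_absorption add.commute add_diff_cancel_right')
lemma binrel3: "(d+1) * ((i+d+1) choose i) = (i+d+1) * ((i+d) choose i)"
  by (metis Suc_times_binomial_add add.commute add_diff_cancel_right' binomial_absorption plus_1_eq_Suc)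

lemma K_eq:
  fixes N1 Nw Nb L :: real and i j :: nat
  shows "(N1 - real i + 1)*(Nw - real i + 1)*(if i=0 then 0 else Mm (i-1) j)
     + (-(N1-real i)*(Nw-real i) - real i*(Nb-N1+real i) - L)*Mm i j
     + (real i+1)*(Nb-N1+real i+1)*Mm (i+1) j
   = Mm i j * (-L - real j*(Nw+Nb-real j+1)) + Mm i (j+1) * ((N1-real (j+1)+1)*(Nw-real (j+1)+1))"
proof (cases "i \<le> j")
  case False
  show ?thesis
  proof (cases "j + 1 = i")
    case True
    then show ?thesis using False by (auto simp: Mm_def)
  next
    case F2: False
    then show ?thesis using False by (auto simp: Mm_def)
  qed
next
  case True
  then obtain d where jd: "j = i + d" using le_iff_add by blast
  define A where "A = real ((i+d) choose i)"
  define X where "X = (if i = 0 then 0 else real ((i+d) choose (i-1)))"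
  define Y where "Y = real ((i+d) choose (i+1))"
  define Z where "Z = real ((i+d+1) choose i)"
  define s :: real where "s = (-1)^d"
  have hX: "X * (real d + 1) = real i * A"
  proof (cases i)
    case 0 then show ?thesis by (simp add: X_def)
  next
    case (Suc i')
    have "real (d+1) * real ((i'+1+d) choose i') = real (i'+1) * real ((i'+1+d) choose (i'+1))"
      using binrel1[of d i'] by (metis of_nat_mult)
    then show ?thesis using Suc by (simp add: X_def A_def algebra_simps)
  qed
  have hY: "Y * (real i + 1) = real d * A"
    using binrel2[of i d] unfolding Y_def A_def by (simp add: algebra_simps flip: of_nat_mult)
  have hZ: "Z * (real d + 1) = (real i + real d + 1) * A"
    using binrel3[of d i] unfolding Z_def A_def by (simp add: algebra_simps flip: of_nat_mult)
  have hp: "(1/(real d+1)) * (real d + 1) = 1" by simp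
  have hq: "(1/(real i+1)) * (real i + 1) = 1" by simp
  have m1: "(if i=0 then 0 else Mm (i-1) j) = - s * X"
    by (cases i) (auto simp: Mm_def X_def s_def jd)
  have m2: "Mm i j = s * A" by (simp add: Mm_def A_def s_def jd)
  have m3: "Mm (i+1) j = - s * Y"
    by (cases d) (auto simp: Mm_def Y_def s_def jd)
  have m4: "Mm i (j+1) = - s * Z"
    by (simp add: Mm_def Z_def s_def jd)
  have "(N1 - real i + 1)*(Nw - real i + 1)*(-s*X)
     + (-(N1-real i)*(Nw-real i) - real i*(Nb-N1+real i) - L)*(s*A)
     + (real i+1)*(Nb-N1+real i+1)*(-s*Y)
   = (s*A) * (-L - (real i+real d)*(Nw+Nb-(real i+real d)+1)) + (-s*Z) * ((N1-(real i+real d+1)+1)*(Nw-(real i+real d+1)+1))"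
    using hX hY hZ hp hq by algebra
  then show ?thesis unfolding m1 m2 m3 m4 using jd by simp
qed


lemma poch_neg_nz: "m \<le> M \<Longrightarrow> pochhammer (- real M) m \<noteq> 0"
  by (auto simp: pochhammer_eq_0_iff)

lemma bvec_lt: "i < k \<Longrightarrow> bvec N1 Nw N k i = 0"
  by (simp add: bvec_def)

lemma bvec_k: "bvec N1 Nw N k k = 1"
  by (simp add: bvec_def)

lemma bvec_step:
  assumes "pochhammer (2 * real k - real N) (Suc n) \<noteq> 0"
  shows "bvec N1 Nw N k (k + Suc n) * (real (Suc n) * (2 * real k - real N + real n))
       = bvec N1 Nw N k (k + n) * (- (real k - real N1 + real n) * (real k - real Nw + real n))"
proof -
  have nz: "pochhammer (2 * real k - real N) n \<noteq> 0" "2 * real k - real N + real n \<noteq> 0"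
    using assms by (auto simp: pochhammer_Suc)
  define u :: real where "u = (-1)^n"
  define p1 where "p1 = pochhammer (real k - real N1) n"
  define p2 where "p2 = pochhammer (real k - real Nw) n"
  define p3 where "p3 = pochhammer (2 * real k - real N) n"
  define f :: real where "f = fact n"
  have fnz: "f \<noteq> 0" by (simp add: f_def)
  have e1: "bvec N1 Nw N k (k + Suc n) = (- u) * (p1 * (real k - real N1 + real n)) * (p2 * (real k - real Nw + real n))
      / (f * (real n + 1) * (p3 * (2 * real k - real N + real n)))"
    by (simp add: bvec_def u_def p1_def p2_def p3_def f_def pochhammer_Suc fact_Suc algebra_simps)
  have e2: "bvec N1 Nw N k (k + n) = u * p1 * p2 / (f * p3)"
    by (simp add: bvec_def u_def p1_def p2_def p3_def f_def)
  have p3nz: "p3 \<noteq> 0" using nz p3_def by simp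
  show ?thesis unfolding e1 e2 using nz(2) p3nz fnz
    by (simp add: divide_simps) (simp add: algebra_simps)
qed

lemma alg3:
  fixes B1 B0 K N N1 Nw Nb n :: real
  assumes "B1 * ((n+1) * (2*K - N + n)) = B0 * (-(K - N1 + n) * (K - Nw + n))"
    and "Nw + Nb = N"
  shows "- (K * (N - K + 1)) * B1 = (N1 - (K + n + 1) + 1) * (Nw - (K + n + 1) + 1) * B0
     - (K + n + 1) * (Nw - (K + n + 1) + Nb + 1) * B1"
  using assms by algebra

context
  fixes N1 N2 Nw Nb N k :: nat
  assumes a1: "N1 \<ge> 1" and a2: "N2 \<ge> 1"
    and a3: "Nw + Nb = N1 + N2" and a4: "N = N1 + N2"
    and a5: "Nw \<le> N1" and a6: "Nw \<le> N2"
    and a7: "k \<le> Nw"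
begin

lemma poch3_nz: "i \<le> Nw \<Longrightarrow> pochhammer (2 * real k - real N) (i - k) \<noteq> 0"
proof -
  assume iN: "i \<le> Nw"
  have le: "2*k \<le> N" using a4 a5 a6 a7 by linarith
  have eq: "2 * real k - real N = - real (N - 2*k)" using le by (simp add: of_nat_diff)
  have le2: "i - k \<le> N - 2*k" using a4 a5 a6 a7 iN by linarith
  show ?thesis unfolding eq by (rule poch_neg_nz[OF le2])
qed

lemma lam1: "real N1 * real N2 * (lam N1 N2 N k - 1) = - (real k * (real N - real k + 1))"
  using a1 a2 by (simp add: lam_def field_simps)

lemma brec:
  assumes "i \<le> Nw"
  shows "real N1 * real N2 * (lam N1 N2 N k - 1) * bvec N1 Nw N k i =
           (real N1 - real i + 1) * (real Nw - real i + 1)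
             * (if i = 0 then 0 else bvec N1 Nw N k (i - 1))
           - real i * (real Nw - real i + real Nb + 1) * bvec N1 Nw N k i"
proof -
  have NN0: "Nw + Nb = N" using a3 a4 by simp
  have NN: "real Nw + real Nb = real N" unfolding NN0[symmetric] by (rule of_nat_add[symmetric])
  consider "i < k" | "i = k" | n where "i = k + Suc n"
  proof -
    assume h1: "i < k \<Longrightarrow> thesis" and h2: "i = k \<Longrightarrow> thesis"
      and h3: "\<And>n. i = k + Suc n \<Longrightarrow> thesis"
    show thesis
    proof (cases "k < i")
      case True
      then obtain n where "i = Suc (k + n)" using less_imp_Suc_add by blast
      then show thesis using h3[of n] by simp
    next
      case False
      then show thesis using h1 h2 by linarith
    qed
  qed
  then show ?thesis
  proof cases
    case 1 then show ?thesis by (simp add: bvec_lt)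
  next
    case 2
    have z: "(if i = 0 then 0 else bvec N1 Nw N k (i - 1)) = 0"
      using 2 by (simp add: bvec_lt)
    have o: "bvec N1 Nw N k i = 1" using 2 by (simp add: bvec_k)
    show ?thesis unfolding lam1 z o using NN 2 by (simp add: algebra_simps)
  next
    case 3
    have st0: "bvec N1 Nw N k (k + Suc n) * (real (Suc n) * (2 * real k - real N + real n))
       = bvec N1 Nw N k (k + n) * (- (real k - real N1 + real n) * (real k - real Nw + real n))"
      apply (rule bvec_step) using poch3_nz[of i] 3 assms by simp
    have st: "bvec N1 Nw N k (k + Suc n) * ((real n + 1) * (2 * real k - real N + real n))
       = bvec N1 Nw N k (k + n) * (- (real k - real N1 + real n) * (real k - real Nw + real n))"
      using st0 by (simp add: add.commute)
    have im: "i - 1 = k + n" using 3 by simp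
    have ir: "real i = real k + real n + 1" using 3 by simp
    have i0: "(if i = 0 then 0 else bvec N1 Nw N k (i - 1)) = bvec N1 Nw N k (k + n)"
      using 3 by simp
    show ?thesis unfolding lam1 i0 ir unfolding 3
      by (rule alg3[OF st NN])
  qed
qed

end


lemma c_eq: "cvec N1 Nw N k i = (\<Sum>j\<le>Nw. Mm i j * bvec N1 Nw N k j)"
proof -
  have "(\<Sum>j\<le>Nw. Mm i j * bvec N1 Nw N k j) = (\<Sum>j\<in>{i..Nw}. Mm i j * bvec N1 Nw N k j)"
    by (rule sum.mono_neutral_right) (auto simp: Mm_def)
  also have "\<dots> = cvec N1 Nw N k i"
    unfolding cvec_def by (rule sum.cong) (auto simp: Mm_def)
  finally show ?thesis by simp
qed

lemma Tsum:
  fixes c :: "nat \<Rightarrow> real"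
  assumes "i \<le> Nw" "c (Suc Nw) = 0"
  shows "(\<Sum>j\<le>Nw. Tmat N1 N2 Nw Nb i j * c j)
     = (if i = 0 then 0 else pp N1 N2 Nw (i-1) * c (i-1)) + rr N1 N2 Nw Nb i * c i
       + qq N1 N2 Nb (i+1) * c (i+1)"
proof -
  have pw: "\<And>j. Tmat N1 N2 Nw Nb i j * c j =
      (if j = i - 1 then (if i = 0 then 0 else pp N1 N2 Nw (i-1) * c (i-1)) else 0)
      + (if j = i then rr N1 N2 Nw Nb i * c i else 0)
      + (if j = i + 1 then qq N1 N2 Nb (i+1) * c (i+1) else 0)"
    by (auto simp: Tmat_def)
  have "(\<Sum>j\<le>Nw. Tmat N1 N2 Nw Nb i j * c j)
     = (\<Sum>j\<le>Nw. (if j = i - 1 then (if i = 0 then 0 else pp N1 N2 Nw (i-1) * c (i-1)) else 0))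
      + (\<Sum>j\<le>Nw. (if j = i then rr N1 N2 Nw Nb i * c i else 0))
      + (\<Sum>j\<le>Nw. (if j = i + 1 then qq N1 N2 Nb (i+1) * c (i+1) else 0))"
    unfolding pw by (simp add: sum.distrib)
  also have "\<dots> = (if i = 0 then 0 else pp N1 N2 Nw (i-1) * c (i-1)) + rr N1 N2 Nw Nb i * c i
       + qq N1 N2 Nb (i+1) * c (i+1)"
  proof (cases "i + 1 \<le> Nw")
    case True then show ?thesis using assms by auto
  next
    case False
    then have "i = Nw" using assms by simp
    then have "c (i+1) = 0" using assms by simp
    then show ?thesis using False assms by auto
  qed
  finally show ?thesis .
qed

lemma alg_S1:
  fixes M P Rr Q lm C0 C1 L u t X :: real
  assumes "M * P = X" "M * Rr = M - u" "M * Q = t" "L = M * lm - M"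
  shows "M * (P + Rr * C0 + Q * C1 - lm * C0) = X + (- u - L) * C0 + t * C1"
proof -
  have "M * (P + Rr * C0 + Q * C1 - lm * C0) = M * P + (M * Rr) * C0 + (M * Q) * C1 - (M * lm) * C0"
    by (simp add: algebra_simps)
  also have "\<dots> = X + (M - u) * C0 + t * C1 - (L + M) * C0" using assms by simp
  finally show ?thesis by (simp add: algebra_simps)
qed

context
  fixes N1 N2 Nw Nb N k :: nat
  assumes a1: "N1 \<ge> 1" and a2: "N2 \<ge> 1"
    and a3: "Nw + Nb = N1 + N2" and a4: "N = N1 + N2"
    and a5: "Nw \<le> N1" and a6: "Nw \<le> N2"
    and a7: "k \<le> Nw"
begin

lemma eig:
  assumes iN: "i \<le> Nw"
  shows "(\<Sum>j\<le>Nw. Tmat N1 N2 Nw Nb i j * cvec N1 Nw N k j) = lam N1 N2 N k * cvec N1 Nw N k i"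
proof -
  let ?b = "bvec N1 Nw N k"
  let ?c = "cvec N1 Nw N k"
  define L where "L = real N1 * real N2 * (lam N1 N2 N k - 1)"
  have NZ: "real N1 * real N2 \<noteq> 0" using a1 a2 by simp
  have cS: "?c (Suc Nw) = 0" by (simp add: cvec_def)
  define e1 where "e1 = (\<lambda>l::nat. (real N1 - real l + 1) * (real Nw - real l + 1))"
  define e0 where "e0 = (\<lambda>j::nat. - L - real j * (real Nw + real Nb - real j + 1))"
  define bp where "bp = (\<lambda>l. if l = 0 then 0 else ?b (l-1))"
  define a where "a = (real N1 - real i + 1) * (real Nw - real i + 1)"
  define s where "s = (-(real N1 - real i)*(real Nw - real i) - real i*(real Nb - real N1 + real i) - L)"
  define t where "t = (real i + 1) * (real Nb - real N1 + real i + 1)"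
  have R: "e0 l * ?b l + e1 l * bp l = 0" if "l \<le> Nw" for l
  proof -
    have h: "L * ?b l = e1 l * bp l - real l * (real Nw - real l + real Nb + 1) * ?b l"
      using brec[OF a1 a2 a3 a4 a5 a6 a7 that] unfolding L_def e1_def bp_def by simp
    show ?thesis unfolding e0_def using h by algebra
  qed
  have S1: "real N1 * real N2 * ((\<Sum>j\<le>Nw. Tmat N1 N2 Nw Nb i j * ?c j) - lam N1 N2 N k * ?c i)
      = a * (if i = 0 then 0 else ?c (i-1)) + s * ?c i + t * ?c (i+1)"
  proof -
    have hr: "real N1 * real N2 * rr N1 N2 Nw Nb i
        = real N1 * real N2 - (real N1 - real i) * (real Nw - real i) - real i * (real Nb - real N1 + real i)"
      using NZ by (simp add: rr_def pp_def qq_def field_simps)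
    have hq: "real N1 * real N2 * qq N1 N2 Nb (i+1) = t"
      using NZ by (simp add: qq_def t_def field_simps)
    have hl: "L = real N1 * real N2 * lam N1 N2 N k - real N1 * real N2"
      by (simp add: L_def algebra_simps)
    define u where "u = (real N1 - real i) * (real Nw - real i) + real i * (real Nb - real N1 + real i)"
    have su: "s = - u - L" unfolding s_def u_def by (simp add: algebra_simps)
    have hr': "real N1 * real N2 * rr N1 N2 Nw Nb i = real N1 * real N2 - u"
      unfolding hr u_def by (simp add: algebra_simps)
    have hP: "real N1 * real N2 * (if i = 0 then 0 else pp N1 N2 Nw (i-1) * ?c (i-1))
        = a * (if i = 0 then 0 else ?c (i-1))"
    proof (cases "i = 0")
      case True then show ?thesis by simp
    next
      case False
      have hp: "real N1 * real N2 * pp N1 N2 Nw (i-1) = a"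
        using NZ False by (simp add: pp_def a_def of_nat_diff field_simps)
      show ?thesis using False hp by (simp add: mult.assoc[symmetric])
    qed
    show ?thesis unfolding Tsum[where c="cvec N1 Nw N k", OF iN cS] su
      by (rule alg_S1[OF hP hr' hq hl])
  qed
  have c1: "(if i = 0 then 0 else ?c (i-1)) = (\<Sum>j\<le>Nw. (if i = 0 then 0 else Mm (i-1) j) * ?b j)"
    by (simp add: c_eq)
  have S2: "a * (if i = 0 then 0 else ?c (i-1)) + s * ?c i + t * ?c (i+1)
      = (\<Sum>j\<le>Nw. (a * (if i = 0 then 0 else Mm (i-1) j) + s * Mm i j + t * Mm (i+1) j) * ?b j)"
    unfolding c1 c_eq[of N1 Nw N k i] c_eq[of N1 Nw N k "i+1"]
    by (simp add: sum.distrib sum_distrib_left algebra_simps)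
  have S3: "(a * (if i = 0 then 0 else Mm (i-1) j) + s * Mm i j + t * Mm (i+1) j)
      = Mm i j * e0 j + Mm i (j+1) * e1 (j+1)" for j
    using K_eq[of "real N1" i "real Nw" j "real Nb" L] unfolding a_def s_def t_def e0_def e1_def
    by simp
  define g where "g = (\<lambda>l. Mm i l * e1 l * bp l)"
  have g0: "g 0 = 0" by (simp add: g_def bp_def)
  have gS: "g (Suc Nw) = 0" by (simp add: g_def e1_def)
  have shift: "(\<Sum>j\<le>Nw. g (Suc j)) = (\<Sum>l\<le>Nw. g l)"
    using sum.atMost_Suc_shift[of g Nw] sum.atMost_Suc[of g Nw] g0 gS by simp
  have S4: "(\<Sum>j\<le>Nw. (Mm i j * e0 j + Mm i (j+1) * e1 (j+1)) * ?b j)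
      = (\<Sum>l\<le>Nw. Mm i l * (e0 l * ?b l + e1 l * bp l))"
  proof -
    have "(\<Sum>j\<le>Nw. (Mm i j * e0 j + Mm i (j+1) * e1 (j+1)) * ?b j)
        = (\<Sum>j\<le>Nw. Mm i j * e0 j * ?b j) + (\<Sum>j\<le>Nw. g (Suc j))"
      by (simp add: g_def bp_def sum.distrib algebra_simps)
    also have "\<dots> = (\<Sum>j\<le>Nw. Mm i j * e0 j * ?b j) + (\<Sum>l\<le>Nw. g l)" by (simp add: shift)
    also have "\<dots> = (\<Sum>l\<le>Nw. Mm i l * (e0 l * ?b l + e1 l * bp l))"
      by (simp add: g_def sum.distrib algebra_simps)
    finally show ?thesis .
  qed
  have S5: "(\<Sum>l\<le>Nw. Mm i l * (e0 l * ?b l + e1 l * bp l)) = 0"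
    by (rule sum.neutral) (simp add: R)
  have "real N1 * real N2 * ((\<Sum>j\<le>Nw. Tmat N1 N2 Nw Nb i j * ?c j) - lam N1 N2 N k * ?c i) = 0"
    unfolding S1 S2 S3 S4 S5 by simp
  then show ?thesis using NZ by simp
qed

end


lemma swap_tri:
  fixes F :: "nat \<Rightarrow> nat \<Rightarrow> real"
  shows "(\<Sum>i\<le>n. \<Sum>j\<le>i. F i j) = (\<Sum>j\<le>n. \<Sum>i=j..n. F i j)"
proof -
  have s1: "\<And>i. i \<in> {..n} \<Longrightarrow> {y. y \<in> {..n} \<and> y \<le> i} = {..i}" by auto
  have s2: "\<And>j. j \<in> {..n} \<Longrightarrow> {x. x \<in> {..n} \<and> j \<le> x} = {j..n}" by auto
  have "(\<Sum>i\<le>n. \<Sum>j\<le>i. F i j) = (\<Sum>i\<in>{..n}. \<Sum>j\<in>{y. y \<in> {..n} \<and> y \<le> i}. F i j)"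
    by (rule sum.cong[OF refl]) (simp only: s1)
  also have "\<dots> = (\<Sum>j\<in>{..n}. \<Sum>i\<in>{x. x \<in> {..n} \<and> j \<le> x}. F i j)"
    by (rule sum.swap_restrict) auto
  also have "\<dots> = (\<Sum>j\<le>n. \<Sum>i=j..n. F i j)"
    by (rule sum.cong[OF refl]) (simp only: s2)
  finally show ?thesis .
qed

lemma polyid:
  fixes x y z :: real and N1 Nw N k :: nat
  assumes a5: "Nw \<le> N1"
  shows "(\<Sum>i = k..Nw. bvec N1 Nw N k i * (x - y * z) ^ i * y ^ (N1 - i) * z ^ (Nw - i))
         = (\<Sum>i\<le>Nw. cvec N1 Nw N k i * x ^ i * y ^ (N1 - i) * z ^ (Nw - i))"
proof -
  let ?b = "bvec N1 Nw N k"
  define F where "F = (\<lambda>i j. ((-1)^(i-j) * real (i choose j) * ?b i) * (x ^ j * y ^ (N1 - j) * z ^ (Nw - j)))"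
  have "(\<Sum>i = k..Nw. ?b i * (x - y * z) ^ i * y ^ (N1 - i) * z ^ (Nw - i))
      = (\<Sum>i\<le>Nw. ?b i * (x - y * z) ^ i * y ^ (N1 - i) * z ^ (Nw - i))"
    by (rule sum.mono_neutral_left) (auto simp: bvec_lt)
  also have "\<dots> = (\<Sum>i\<le>Nw. \<Sum>j\<le>i. F i j)"
  proof (rule sum.cong[OF refl])
    fix i assume "i \<in> {..Nw}"
    then have iN: "i \<le> N1" "i \<le> Nw" using a5 by auto
    have "(x - y * z) ^ i = (\<Sum>j\<le>i. real (i choose j) * x ^ j * (- (y * z)) ^ (i - j))"
      using binomial_ring[of x "- (y*z)" i] by (simp only: diff_conv_add_uminus)
    then have "?b i * (x - y * z) ^ i * y ^ (N1 - i) * z ^ (Nw - i)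
        = (\<Sum>j\<le>i. ?b i * (real (i choose j) * x ^ j * (- (y * z)) ^ (i - j)) * y ^ (N1 - i) * z ^ (Nw - i))"
      by (simp only: sum_distrib_left sum_distrib_right)
    also have "\<dots> = (\<Sum>j\<le>i. F i j)"
    proof (rule sum.cong[OF refl])
      fix j assume "j \<in> {..i}"
      then have ji: "j \<le> i" by simp
      have ey0: "(i - j) + (N1 - i) = N1 - j" using ji iN by arith
      have ez0: "(i - j) + (Nw - i) = Nw - j" using ji iN by arith
      have ey: "y ^ (i - j) * y ^ (N1 - i) = y ^ (N1 - j)"
        unfolding ey0[symmetric] by (rule power_add[symmetric])
      have ez: "z ^ (i - j) * z ^ (Nw - i) = z ^ (Nw - j)"
        unfolding ez0[symmetric] by (rule power_add[symmetric])
      have "(- (y * z)) ^ (i - j) = (-1)^(i-j) * y ^ (i - j) * z ^ (i - j)"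
        by (simp only: power_minus[of "y*z"] power_mult_distrib mult.assoc)
      then have "?b i * (real (i choose j) * x ^ j * (- (y * z)) ^ (i - j)) * y ^ (N1 - i) * z ^ (Nw - i)
         = ((-1)^(i-j) * real (i choose j) * ?b i) * (x ^ j * (y ^ (i - j) * y ^ (N1 - i)) * (z ^ (i - j) * z ^ (Nw - i)))"
        by (simp only: mult_ac)
      then show "?b i * (real (i choose j) * x ^ j * (- (y * z)) ^ (i - j)) * y ^ (N1 - i) * z ^ (Nw - i) = F i j"
        unfolding F_def ey ez by (simp only: mult_ac)
    qed
    finally show "?b i * (x - y * z) ^ i * y ^ (N1 - i) * z ^ (Nw - i) = (\<Sum>j\<le>i. F i j)" .
  qed
  also have "\<dots> = (\<Sum>j\<le>Nw. \<Sum>i=j..Nw. F i j)" by (rule swap_tri)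
  also have "\<dots> = (\<Sum>j\<le>Nw. cvec N1 Nw N k j * x ^ j * y ^ (N1 - j) * z ^ (Nw - j))"
  proof (rule sum.cong[OF refl])
    fix j
    show "(\<Sum>i=j..Nw. F i j) = cvec N1 Nw N k j * x ^ j * y ^ (N1 - j) * z ^ (Nw - j)"
      unfolding F_def cvec_def sum_distrib_right by (simp only: mult.assoc)
  qed
  finally show ?thesis .
qed


context
  fixes N1 N2 Nw Nb N k :: nat
  assumes a1: "N1 \<ge> 1" and a2: "N2 \<ge> 1"
    and a3: "Nw + Nb = N1 + N2" and a4: "N = N1 + N2"
    and a5: "Nw \<le> N1" and a6: "Nw \<le> N2"
    and a7: "k \<le> Nw"
begin

lemma cnz: "cvec N1 Nw N k Nw \<noteq> 0"
proof -
  have c: "cvec N1 Nw N k Nw = bvec N1 Nw N k Nw" by (simp add: cvec_def)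
  have e1: "real k - real N1 = - real (N1 - k)" using a5 a7 by (simp add: of_nat_diff)
  have e2: "real k - real Nw = - real (Nw - k)" using a7 by (simp add: of_nat_diff)
  have p1: "pochhammer (real k - real N1) (Nw - k) \<noteq> 0"
    unfolding e1 by (rule poch_neg_nz) (use a5 in linarith)
  have p2: "pochhammer (real k - real Nw) (Nw - k) \<noteq> 0"
    unfolding e2 by (rule poch_neg_nz) simp
  have p3: "pochhammer (2 * real k - real N) (Nw - k) \<noteq> 0"
    by (rule poch3_nz[OF a1 a2 a3 a4 a5 a6 a7]) simp
  show ?thesis unfolding c using p1 p2 p3 a7 by (simp add: bvec_def)
qed

end

theorem mainTheorem3:
  fixes N1 N2 Nw Nb N k :: nat
  assumes "N1 \<ge> 1" and "N2 \<ge> 1"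
    and "Nw + Nb = N1 + N2" and "N = N1 + N2"
    and "Nw \<le> N1" and "Nw \<le> N2"
    and "k \<le> Nw"
  shows "(\<forall>i. k \<le> i \<and> i \<le> Nw \<longrightarrow> pochhammer (2 * real k - real N) (i - k) \<noteq> 0)
    \<and> (\<forall>i \<le> Nw.
         real N1 * real N2 * (lam N1 N2 N k - 1) * bvec N1 Nw N k i =
           (real N1 - real i + 1) * (real Nw - real i + 1)
             * (if i = 0 then 0 else bvec N1 Nw N k (i - 1))
           - real i * (real Nw - real i + real Nb + 1) * bvec N1 Nw N k i)
    \<and> (\<forall>i \<le> Nw. (\<Sum>j\<le>Nw. Tmat N1 N2 Nw Nb i j * cvec N1 Nw N k j)
                  = lam N1 N2 N k * cvec N1 Nw N k i)
    \<and> (\<exists>i \<le> Nw. cvec N1 Nw N k i \<noteq> 0)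
    \<and> (\<forall>x y z :: real.
         (\<Sum>i = k..Nw. bvec N1 Nw N k i * (x - y * z) ^ i * y ^ (N1 - i) * z ^ (Nw - i))
         = (\<Sum>i\<le>Nw. cvec N1 Nw N k i * x ^ i * y ^ (N1 - i) * z ^ (Nw - i)))"
  using poch3_nz[OF assms] brec[OF assms] eig[OF assms] cnz[OF assms] polyid[OF assms(5)]
  by blast


end
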